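(* Let $P=\sum_{k=1}^K N_k$, $\kappa=2P$, and assume $N_I\ge\kappa$; write $N=N_I$. Let $\mathbf U\in\bar{\mathcal U}$ be such that every square submatrix of $\mathbf M_{\mathbf U}$ is nonsingular. Let $\mathbf a_n^T$ and $\mathbf b_n^T$ ($n=1,\dots,N$) be the rows of $\mathbf M_{\mathbf U}$ and $\boldsymbol\Gamma_{\mathbf U}$, respectively, let $\mathbf A$ be the block matrix $[\mathbf A_{m,n}]_{m,n=1}^N$ with $\mathbf A_{m,n}\in\mathbb R^{\kappa\times\min\{\kappa,N-n+1\}}$, whose $q$-th column is $\mathbf a_{q+n-1}$ if $m=n$, $\mathbf a_n$ if $m=q+n-1\neq n$, and $\mathbf 0$ otherwise, and let $\mathbf b=[\mathbf b_1^T,\dots,\mathbf b_N^T]^T\in\mathbb R^{N\kappa}$. Then $$\operatorname{rank}([\mathbf A\ \ \mathbf b])=N\kappa-\frac{\kappa(\kappa-1)}{2}.$$ (In particular, together with $\operatorname{rank}\mathbf A=N\kappa-\kappa(\kappa-1)/2$, the system $\mathbf A\mathbf x=\mathbf b$ is solvable.)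
   Context: $Z_0>0$, $\mathbf H_r\in\mathbb C^{P\times N_I}$ is arbitrary, $\mathsf i$ is the imaginary unit, and $\mathcal R(\cdot),\mathcal I(\cdot)$ denote entrywise real and imaginary parts. $\bar{\mathcal U}=\{\mathbf U\in\mathbb C^{N_I\times P}:\ \mathbf U^H\mathbf U=\mathbf H_r\mathbf H_r^H,\ \mathbf U^T\mathbf H_r^H=(\mathbf U^T\mathbf H_r^H)^T\}$. For $\mathbf U\in\mathbb C^{N_I\times P}$, $\mathbf M_{\mathbf U}=[\mathcal R(\mathsf iZ_0(\mathbf H_r^H+\mathbf U))\ \ \mathcal I(\mathsf iZ_0(\mathbf H_r^H+\mathbf U))]\in\mathbb R^{N_I\times 2P}$ and $\boldsymbol\Gamma_{\mathbf U}=[\mathcal R(\mathbf U-\mathbf H_r^H)\ \ \mathcal I(\mathbf U-\mathbf H_r^H)]\in\mathbb R^{N_I\times 2P}$. The matrix $\mathbf A$ has $N\kappa$ rows and $N\kappa-\kappa(\kappa-1)/2$ columns; its column indexed by block $n$ and position $q$ corresponds to the variable $B_{n,n+q-1}$ of a real symmetric band matrix $\mathbf B$ with band width $\kappa-1$, and $\mathbf A\mathbf x=\mathbf b$ is the equation $\mathbf B\mathbf M_{\mathbf U}=\boldsymbol\Gamma_{\mathbf U}$ written row by row. *)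

theory Defs
  imports "Jordan_Normal_Form.Schur_Decomposition" "Jordan_Normal_Form.DL_Rank"
    "Jordan_Normal_Form.DL_Submatrix"
begin

definition Ubar_set :: "complex mat \<Rightarrow> complex mat set" where
  "Ubar_set Hr = {U. U \<in> carrier_mat (dim_col Hr) (dim_row Hr)
      \<and> mat_adjoint U * U = Hr * mat_adjoint Hr
      \<and> transpose_mat U * mat_adjoint Hr = transpose_mat (transpose_mat U * mat_adjoint Hr)}"

definition M_mat :: "real \<Rightarrow> complex mat \<Rightarrow> complex mat \<Rightarrow> real mat" where
  "M_mat Z0 Hr U = (let P = dim_row Hr; C = mat_adjoint Hr + U in
     mat (dim_row C) (2 * P) (\<lambda>(n, j).
       if j < P then Re (\<i> * complex_of_real Z0 * C $$ (n, j))
       else Im (\<i> * complex_of_real Z0 * C $$ (n, j - P))))"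

definition Gamma_mat :: "complex mat \<Rightarrow> complex mat \<Rightarrow> real mat" where
  "Gamma_mat Hr U = (let P = dim_row Hr; C = U - mat_adjoint Hr in
     mat (dim_row C) (2 * P) (\<lambda>(n, j).
       if j < P then Re (C $$ (n, j)) else Im (C $$ (n, j - P))))"

text \<open>Column q (0-indexed) of block column n (0-indexed) of A: its block row m
  (rows m*kappa .. m*kappa+kappa-1) is a_{q+n} if m = n, a_n if m = q+n (and m ~= n),
  and 0 otherwise, where a_i is the i-th row of M (0-indexed).\<close>
definition A_col :: "nat \<Rightarrow> nat \<Rightarrow> real mat \<Rightarrow> nat \<Rightarrow> nat \<Rightarrow> real vec" where
  "A_col \<kappa> N M n q = vec (N * \<kappa>) (\<lambda>r. let m = r div \<kappa>; p = r mod \<kappa> in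
      if m = n then M $$ (q + n, p) else if m = q + n then M $$ (n, p) else 0)"

definition A_mat :: "nat \<Rightarrow> nat \<Rightarrow> real mat \<Rightarrow> real mat" where
  "A_mat \<kappa> N M = mat_of_cols (N * \<kappa>)
     (concat (map (\<lambda>n. map (\<lambda>q. A_col \<kappa> N M n q) [0..<min \<kappa> (N - n)]) [0..<N]))"

definition b_vec :: "nat \<Rightarrow> nat \<Rightarrow> real mat \<Rightarrow> real vec" where
  "b_vec \<kappa> N G = vec (N * \<kappa>) (\<lambda>r. G $$ (r div \<kappa>, r mod \<kappa>))"

end

theory Submission
  imports Defs
begin

definition LP :: "nat \<Rightarrow> nat \<Rightarrow> (nat \<times> nat) list" where
  "LP k N = concat (map (\<lambda>n. map (\<lambda>q. (n,q)) [0..<min k (N-n)]) [0..<N])"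

definition PL :: "nat \<Rightarrow> (nat \<times> nat) list" where
  "PL k = concat (map (\<lambda>j. map (\<lambda>i. (i,j)) [0..<j]) [0..<k])"

lemma set_LP: "set (LP k N) = {(n,q). n<N \<and> q < min k (N-n)}"
  unfolding LP_def by auto

lemma distinct_concat_pairs:
  "distinct xs \<Longrightarrow> (\<And>n. distinct (g n)) \<Longrightarrow> distinct (concat (map (\<lambda>n. map (Pair n) (g n)) xs))"
  by (induction xs) (auto simp: distinct_map inj_on_def)

lemma distinct_concat_pairs2:
  "distinct xs \<Longrightarrow> (\<And>n. distinct (g n)) \<Longrightarrow> distinct (concat (map (\<lambda>j. map (\<lambda>i. (i,j)) (g j)) xs))"
  by (induction xs) (auto simp: distinct_map inj_on_def)

lemma distinct_LP: "distinct (LP k N)"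
  unfolding LP_def by (rule distinct_concat_pairs) auto

lemma length_LP: "length (LP k N) = (\<Sum>n<N. min k (N-n))"
  unfolding LP_def by (simp add: length_concat comp_def sum_list_distinct_conv_sum_set atLeast0LessThan)

lemma set_PL: "set (PL k) = {(i,j). i<j \<and> j<k}"
  unfolding PL_def by auto

lemma distinct_PL: "distinct (PL k)"
  unfolding PL_def by (rule distinct_concat_pairs2) auto

lemma sum_id_lessThan: "2 * (\<Sum>j<k. j) = k * (k - 1::nat)"
proof (induction k)
  case 0 then show ?case by simp
next
  case (Suc k) then show ?case by (cases k) (auto simp: algebra_simps)
qed

lemma length_PL: "length (PL k) = k * (k - 1) div 2"
proof -
  have "length (PL k) = (\<Sum>j<k. j)"
    unfolding PL_def by (simp add: length_concat comp_def sum_list_distinct_conv_sum_set atLeast0LessThan)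
  then show ?thesis using sum_id_lessThan[of k] by simp
qed

lemma cols_A: "cols (A_mat k N M) = map (\<lambda>(n,q). A_col k N M n q) (LP k N)"
proof -
  have "set (concat (map (\<lambda>n. map (\<lambda>q. A_col k N M n q) [0..<min k (N - n)]) [0..<N])) \<subseteq> carrier_vec (N*k)"
    by (auto simp: A_col_def)
  then show ?thesis unfolding A_mat_def LP_def
    by (simp add: map_concat comp_def)
qed

lemma s_step: "(\<Sum>n<Suc N. min (k::nat) (Suc N - n)) = min k (Suc N) + (\<Sum>n<N. min k (N-n))"
  unfolding sum.lessThan_Suc_shift by simp

lemma s_small: "(N::nat) \<le> k \<Longrightarrow> 2 * (\<Sum>n<N. min k (N-n)) = N * (N+1)"
proof (induction N)
  case 0 then show ?case by simp
next
  case (Suc N)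
  then show ?case unfolding s_step by (simp add: algebra_simps)
qed

lemma s_large: "(k::nat) \<le> N \<Longrightarrow> 2 * (\<Sum>n<N. min k (N-n)) + k * (k - 1) = 2 * N * k"
proof (induction N rule: dec_induct)
  case base
  then show ?case using s_small[of k k] by (cases k) (auto simp: algebra_simps)
next
  case (step n)
  have m: "min k (Suc n) = k" using step(1) by simp
  define T where "T = k * (k - 1)"
  have "2 * (\<Sum>na<n. min k (n - na)) + T = 2 * n * k" using step(3) unfolding T_def .
  then have "2 * (min k (Suc n) + (\<Sum>na<n. min k (n - na))) + T = 2 * Suc n * k"
    unfolding m by (simp add: algebra_simps)
  then show ?case unfolding s_step T_def .
qed

lemma count: "k \<le> N \<Longrightarrow> length (LP k N) + length (PL k) = N * k"
  "k \<le> N \<Longrightarrow> length (LP k N) = N * k - k * (k - 1) div 2"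
proof -
  assume "k \<le> N"
  from s_large[OF this] have e: "2 * length (LP k N) + k * (k - 1) = 2 * N * k" by (simp add: length_LP)
  have ev: "even (k * (k - 1))" by (cases "even k") (auto simp: dvd_mult2)
  then obtain b where b: "k * (k - 1) = 2 * b" by (elim evenE)
  then have b2: "k * (k - 1) div 2 = b" by simp
  show "length (LP k N) + length (PL k) = N * k" unfolding length_PL b2 using e b by linarith
  show "length (LP k N) = N * k - k * (k - 1) div 2" unfolding b2 using e b by linarith
qed



lemma divmod_idx: "p < (k::nat) \<Longrightarrow> (m*k+p) div k = m" "p < k \<Longrightarrow> (m*k+p) mod k = p"
  by auto

lemma idx_lt: "m < N \<Longrightarrow> j < k \<Longrightarrow> m*k+j < (N::nat)*k"
proof -
  assume a: "m < N" "j < k"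
  have "(m+1)*k \<le> N*k" using a by (intro mult_right_mono) auto
  then show ?thesis using a by simp
qed

lemma A_col_idx: "m < N \<Longrightarrow> p < k \<Longrightarrow> A_col k N M n q $ (m*k+p) =
   (if m = n then M $$ (q+n, p) else if m = q+n then M $$ (n,p) else 0)"
proof -
  assume a: "m < N" "p < k"
  then have "m*k+p < N*k" by (rule idx_lt)
  then show ?thesis unfolding A_col_def using a by (simp add: divmod_idx Let_def)
qed

lemma pick_interval: "i < a \<Longrightarrow> pick {m..<m+a} i = m + i"
proof (induction i)
  case 0
  show ?case unfolding pick.simps by (rule Least_equality) (use 0 in auto)
next
  case (Suc i)
  then have "pick {m..<m+a} i = m + i" by simp
  note e = this
  show ?case unfolding pick.simps(2) e by (rule Least_equality) (use Suc in auto)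
qed

lemma submatrix_interval: "m + a \<le> dim_row M \<Longrightarrow> a \<le> dim_col M \<Longrightarrow>
  submatrix M {m..<m+a} {..<a} = mat a a (\<lambda>(i,j). M $$ (m+i, j))"
proof -
  assume a: "m + a \<le> dim_row M" "a \<le> dim_col M"
  have c1: "{i. i < dim_row M \<and> i \<in> {m..<m+a}} = {m..<m+a}" using a by auto
  have c2: "{i. i < dim_col M \<and> i \<in> {..<a}} = {..<a}" using a by auto
  have p2: "j < a \<Longrightarrow> pick {..<a} j = j" for j
    using pick_interval[of j a 0] by (simp add: lessThan_atLeast0)
  show ?thesis unfolding submatrix_def c1 c2
    by (rule eq_matI) (auto simp: pick_interval p2)
qed

lemma rows_indep:
  fixes M :: "real mat"
  assumes d: "det (mat a a (\<lambda>(i,j). M $$ (m+i, j))) \<noteq> 0"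
    and h: "\<forall>j<a. (\<Sum>q<a. y q * M $$ (m+q, j)) = 0"
  shows "\<forall>q<a. y q = 0"
proof -
  let ?S = "mat a a (\<lambda>(i,j). M $$ (m+i, j))"
  let ?T = "transpose_mat ?S"
  have T: "?T \<in> carrier_mat a a" by simp
  have dT: "det ?T \<noteq> 0" using d by (subst det_transpose[where n=a]) auto
  define v where "v = vec a y"
  have "?T *\<^sub>v v = 0\<^sub>v a"
  proof (rule eq_vecI)
    fix j assume j: "j < dim_vec (0\<^sub>v a :: real vec)"
    have "(?T *\<^sub>v v) $ j = (\<Sum>q<a. M $$ (m+q, j) * y q)"
      using j unfolding v_def by (simp add: scalar_prod_def lessThan_atLeast0)
    also have "\<dots> = 0" using h j by (simp add: mult.commute)
    finally show "(?T *\<^sub>v v) $ j = 0\<^sub>v a $ j" using j by simp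
  qed simp
  then have "v = 0\<^sub>v a" using det_0_iff_vec_prod_zero_field[OF T] dT unfolding v_def by (metis vec_carrier)
  then show ?thesis unfolding v_def by (metis index_vec index_zero_vec(1))
qed

lemma sum_fst_eq:
  "(\<Sum>p\<in>set (LP k N). if fst p = m then f (snd p) else 0) = (\<Sum>q<min k (N-m). f q)" if "m < N"
proof -
  have "(\<Sum>p\<in>set (LP k N). if fst p = m then f (snd p) else 0) = (\<Sum>p\<in>{p\<in>set (LP k N). fst p = m}. f (snd p))"
    by (rule sum.inter_filter[symmetric]) simp
  also have "{p\<in>set (LP k N). fst p = m} = Pair m ` {..<min k (N-m)}"
    unfolding set_LP using that by auto
  also have "(\<Sum>p\<in>Pair m ` {..<min k (N-m)}. f (snd p)) = (\<Sum>q<min k (N-m). f q)"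
    by (subst sum.reindex) (auto simp: inj_on_def)
  finally show ?thesis .
qed

lemma inj_pairs:
  fixes M :: "real mat"
  assumes MIN: "\<forall>m a. m + a \<le> N \<longrightarrow> a \<le> k \<longrightarrow> det (mat a a (\<lambda>(i,j). M $$ (m+i, j))) \<noteq> 0"
    and H: "\<forall>r<N*k. (\<Sum>p\<in>set (LP k N). y p * A_col k N M (fst p) (snd p) $ r) = 0"
  shows "\<forall>p\<in>set (LP k N). y p = 0"
proof -
  have "\<forall>q<min k (N-m). y (m,q) = 0" if "m < N" for m
    using that
  proof (induction m rule: less_induct)
    case (less m)
    let ?a = "min k (N-m)"
    have ma: "m + ?a \<le> N" using less.prems by simp
    have S0: "(\<Sum>q<?a. y (m,q) * M $$ (m+q, j)) = 0" if j: "j < ?a" for j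
    proof -
      have jk: "j < k" using j by simp
      have r: "m*k+j < N*k" using less.prems jk by (rule idx_lt)
      have pw: "y p * A_col k N M (fst p) (snd p) $ (m*k+j) = (if fst p = m then y (m, snd p) * M $$ (m + snd p, j) else 0)"
        if p: "p \<in> set (LP k N)" for p
      proof -
        obtain n q where pq: "p = (n,q)" by (cases p)
        have nq: "n < N" "q < min k (N-n)" using p unfolding pq set_LP by auto
        consider "n < m" | "n = m" | "n > m" by linarith
        then show ?thesis
        proof cases
          case 1
          then have "y (n,q) = 0" using less.IH[OF 1] nq by auto
          then show ?thesis using 1 pq by simp
        next
          case 2
          then show ?thesis using pq A_col_idx[OF less.prems jk] by (simp add: add.commute)
        next
          case 3
          then show ?thesis using pq A_col_idx[OF less.prems jk] by simp
        qed
      qed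
      have "0 = (\<Sum>p\<in>set (LP k N). y p * A_col k N M (fst p) (snd p) $ (m*k+j))" using H r by simp
      also have "\<dots> = (\<Sum>p\<in>set (LP k N). if fst p = m then y (m, snd p) * M $$ (m + snd p, j) else 0)"
        using pw by (rule sum.cong[OF refl])
      also have "\<dots> = (\<Sum>q<?a. y (m,q) * M $$ (m+q, j))"
        by (rule sum_fst_eq[OF less.prems])
      finally show ?thesis by simp
    qed
    have D: "det (mat ?a ?a (\<lambda>(i,j). M $$ (m+i, j))) \<noteq> 0"
      using MIN[rule_format, OF ma] by simp
    have S: "\<forall>j<?a. (\<Sum>q<?a. y (m,q) * M $$ (m+q, j)) = 0" using S0 by blast
    show ?case using rows_indep[OF D S] .
  qed
  then show ?thesis unfolding set_LP by blast
qed

lemma inj_list: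
  fixes M :: "real mat"
  assumes MIN: "\<forall>m a. m + a \<le> N \<longrightarrow> a \<le> k \<longrightarrow> det (mat a a (\<lambda>(i,j). M $$ (m+i, j))) \<noteq> 0"
    and H: "\<forall>r<N*k. (\<Sum>t<length (LP k N). z t * A_col k N M (fst (LP k N ! t)) (snd (LP k N ! t)) $ r) = 0"
  shows "\<forall>t<length (LP k N). z t = 0"
proof -
  let ?L = "LP k N"
  let ?I = "{..<length ?L}"
  have inj: "inj_on (nth ?L) ?I" using distinct_LP by (simp add: inj_on_nth)
  have im: "nth ?L ` ?I = set ?L" by (auto simp: set_conv_nth)
  define y where "y p = z (the_inv_into ?I (nth ?L) p)" for p
  have yz: "t < length ?L \<Longrightarrow> y (?L ! t) = z t" for t
    unfolding y_def using the_inv_into_f_f[OF inj] by simp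
  have "\<forall>r<N*k. (\<Sum>p\<in>set ?L. y p * A_col k N M (fst p) (snd p) $ r) = 0"
  proof (intro allI impI)
    fix r assume r: "r < N*k"
    have "(\<Sum>p\<in>set ?L. y p * A_col k N M (fst p) (snd p) $ r) =
          (\<Sum>t\<in>?I. y (?L ! t) * A_col k N M (fst (?L ! t)) (snd (?L ! t)) $ r)"
      unfolding im[symmetric] by (rule sum.reindex[OF inj, unfolded comp_def])
    also have "\<dots> = (\<Sum>t<length ?L. z t * A_col k N M (fst (?L ! t)) (snd (?L ! t)) $ r)"
      by (rule sum.cong) (auto simp: yz)
    finally show "(\<Sum>p\<in>set ?L. y p * A_col k N M (fst p) (snd p) $ r) = 0" using H r by simp
  qed
  note Y = inj_pairs[OF MIN this]
  show ?thesis
  proof (intro allI impI)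
    fix t assume t: "t < length ?L"
    then have "?L ! t \<in> set ?L" by simp
    then have "y (?L ! t) = 0" using Y by blast
    then show "z t = 0" using yz[OF t] by simp
  qed
qed



definition phi :: "nat \<Rightarrow> nat \<Rightarrow> real mat \<Rightarrow> nat \<Rightarrow> nat \<Rightarrow> real vec \<Rightarrow> real" where
  "phi k N M i j v = (\<Sum>m<N. M $$ (m,i) * v $ (m*k+j) - M $$ (m,j) * v $ (m*k+i))"

lemma phi_A_col:
  assumes i: "i < k" and j: "j < k" and n: "n < N" and qn: "q + n < N"
  shows "phi k N M i j (A_col k N M n q) = 0"
proof -
  let ?a = "M $$ (n,i) * M $$ (q+n,j) - M $$ (n,j) * M $$ (q+n,i)"
  let ?b = "if q = 0 then 0 else M $$ (q+n,i) * M $$ (n,j) - M $$ (q+n,j) * M $$ (n,i)"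
  have pw: "M $$ (m,i) * A_col k N M n q $ (m*k+j) - M $$ (m,j) * A_col k N M n q $ (m*k+i)
     = (if m = n then ?a else 0) + (if m = q + n then ?b else 0)" if m: "m \<in> {..<N}" for m
    using m A_col_idx[of m N j k M n q] A_col_idx[of m N i k M n q] i j by auto
  have "phi k N M i j (A_col k N M n q) = (\<Sum>m<N. (if m = n then ?a else 0) + (if m = q + n then ?b else 0))"
    unfolding phi_def by (rule sum.cong[OF refl pw])
  also have "\<dots> = ?a + ?b" using n qn by (simp add: sum.distrib)
  also have "\<dots> = 0" by (cases "q = 0") (auto simp: algebra_simps)
  finally show ?thesis .
qed

definition Xc :: "nat \<Rightarrow> nat \<Rightarrow> real mat \<Rightarrow> nat \<times> nat \<Rightarrow> real vec" where
  "Xc k N N0 al = vec (N*k) (\<lambda>r. if r div k < k \<and> r mod k = snd al then N0 $$ (fst al, r div k) else 0)"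

lemma Xc_idx: "m < N \<Longrightarrow> j < k \<Longrightarrow> Xc k N N0 (a,l) $ (m*k+j) = (if m < k \<and> j = l then N0 $$ (a, m) else 0)"
  unfolding Xc_def using idx_lt[of m N j k] by (simp add: divmod_idx)

lemma sum_restrict_lt: "(k::nat) \<le> N \<Longrightarrow> (\<Sum>m<N. if m < k then f m else 0) = (\<Sum>m<k. f m)"
proof -
  assume "k \<le> N"
  then have "{m\<in>{..<N}. m < k} = {..<k}" by auto
  then show ?thesis using sum.inter_filter[of "{..<N}" f "\<lambda>m. m < k"] by simp
qed

lemma phi_Xc:
  fixes M N0 :: "real mat"
  assumes kN: "k \<le> N" and N0: "N0 \<in> carrier_mat k k"
    and inv: "N0 * mat k k (\<lambda>(i,j). M $$ (i,j)) = 1\<^sub>m k"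
    and ij: "i < j" "j < k" and al: "a < l" "l < k"
  shows "phi k N M i j (Xc k N N0 (a,l)) = (if (i,j) = (a,l) then 1 else 0)"
proof -
  have e: "(\<Sum>m<k. N0 $$ (a,m) * M $$ (m,c)) = (if a = c then 1 else 0)" if c: "c < k" for c
  proof -
    have "(N0 * mat k k (\<lambda>(i,j). M $$ (i,j))) $$ (a,c) = (\<Sum>m<k. N0 $$ (a,m) * M $$ (m,c))"
      using N0 al c by (simp add: scalar_prod_def lessThan_atLeast0)
    then show ?thesis using inv al c by simp
  qed
  have pw: "M $$ (m,i) * Xc k N N0 (a,l) $ (m*k+j) - M $$ (m,j) * Xc k N N0 (a,l) $ (m*k+i)
     = (if m < k then (if j = l then N0 $$ (a,m) * M $$ (m,i) else 0) - (if i = l then N0 $$ (a,m) * M $$ (m,j) else 0) else 0)"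
    if m: "m \<in> {..<N}" for m
    using m Xc_idx[of m N j k N0 a l] Xc_idx[of m N i k N0 a l] ij by auto
  have "phi k N M i j (Xc k N N0 (a,l)) = (\<Sum>m<N. if m < k then (if j = l then N0 $$ (a,m) * M $$ (m,i) else 0) - (if i = l then N0 $$ (a,m) * M $$ (m,j) else 0) else 0)"
    unfolding phi_def by (rule sum.cong[OF refl pw])
  also have "\<dots> = (\<Sum>m<k. (if j = l then N0 $$ (a,m) * M $$ (m,i) else 0) - (if i = l then N0 $$ (a,m) * M $$ (m,j) else 0))"
    by (rule sum_restrict_lt[OF kN])
  also have "\<dots> = (if j = l then (\<Sum>m<k. N0 $$ (a,m) * M $$ (m,i)) else 0) - (if i = l then (\<Sum>m<k. N0 $$ (a,m) * M $$ (m,j)) else 0)"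
    by (simp add: sum_subtractf)
  also have "\<dots> = (if j = l then (if a = i then 1 else 0) else 0) - (if i = l then (if a = j then 1 else 0) else 0)"
    using e ij by simp
  also have "\<dots> = (if (i,j) = (a,l) then 1 else 0)" using ij al by auto
  finally show ?thesis .
qed

lemma phi_mult:
  fixes E :: "real mat"
  assumes E: "E \<in> carrier_mat (N*k) nc" and z: "z \<in> carrier_vec nc" and i: "i < k" and j: "j < k"
  shows "phi k N M i j (E *\<^sub>v z) = (\<Sum>t<nc. z $ t * phi k N M i j (col E t))"
proof -
  have ev: "(E *\<^sub>v z) $ (m*k+c) = (\<Sum>t<nc. E $$ (m*k+c, t) * z $ t)" if "m < N" "c < k" for m c
    using idx_lt[OF that] E z by (simp add: scalar_prod_def lessThan_atLeast0)
  have cv: "col E t $ (m*k+c) = E $$ (m*k+c, t)" if "m < N" "c < k" for m c t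
    using idx_lt[OF that] E by (simp add: col_def)
  have "phi k N M i j (E *\<^sub>v z) = (\<Sum>m<N. \<Sum>t<nc. z $ t * (M $$ (m,i) * E $$ (m*k+j, t) - M $$ (m,j) * E $$ (m*k+i, t)))"
    unfolding phi_def
  proof (rule sum.cong[OF refl])
    fix m assume "m \<in> {..<N}"
    then have m: "m < N" by simp
    show "M $$ (m,i) * (E *\<^sub>v z) $ (m*k+j) - M $$ (m,j) * (E *\<^sub>v z) $ (m*k+i) =
      (\<Sum>t<nc. z $ t * (M $$ (m,i) * E $$ (m*k+j, t) - M $$ (m,j) * E $$ (m*k+i, t)))"
      unfolding ev[OF m i] ev[OF m j]
      by (simp add: sum_distrib_left sum_subtractf[symmetric] algebra_simps)
  qed
  also have "\<dots> = (\<Sum>t<nc. \<Sum>m<N. z $ t * (M $$ (m,i) * E $$ (m*k+j, t) - M $$ (m,j) * E $$ (m*k+i, t)))"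
    by (rule sum.swap)
  also have "\<dots> = (\<Sum>t<nc. z $ t * phi k N M i j (col E t))"
    unfolding phi_def
  proof (rule sum.cong[OF refl])
    fix t
    have "(\<Sum>m<N. M $$ (m, i) * col E t $ (m * k + j) - M $$ (m, j) * col E t $ (m * k + i))
        = (\<Sum>m<N. M $$ (m,i) * E $$ (m*k+j, t) - M $$ (m,j) * E $$ (m*k+i, t))"
      by (rule sum.cong[OF refl]) (simp add: cv i j)
    then show "(\<Sum>m<N. z $ t * (M $$ (m,i) * E $$ (m*k+j, t) - M $$ (m,j) * E $$ (m*k+i, t))) =
      z $ t * (\<Sum>m<N. M $$ (m, i) * col E t $ (m * k + j) - M $$ (m, j) * col E t $ (m * k + i))"
      by (simp add: sum_distrib_left)
  qed
  finally show ?thesis .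
qed



lemma real_sym:
  fixes x y :: "nat \<Rightarrow> nat \<Rightarrow> complex"
  assumes S1: "\<And>a b. a < P \<Longrightarrow> b < P \<Longrightarrow> (\<Sum>m<N. x m a * y m b) = (\<Sum>m<N. x m b * y m a)"
    and S2: "\<And>a b. a < P \<Longrightarrow> b < P \<Longrightarrow> (\<Sum>m<N. cnj (x m a) * y m b) = cnj (\<Sum>m<N. cnj (x m b) * y m a)"
    and i: "i < 2*P" and j: "j < 2*P"
  shows "(\<Sum>m<N. (if i < P then Re (x m i) else Im (x m (i-P))) * (if j < P then Re (y m j) else Im (y m (j-P))))
       = (\<Sum>m<N. (if j < P then Re (x m j) else Im (x m (j-P))) * (if i < P then Re (y m i) else Im (y m (i-P))))"
proof -
  have R1: "(\<Sum>m<N. Re (x m a) * Re (y m b)) - (\<Sum>m<N. Im (x m a) * Im (y m b))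
        = (\<Sum>m<N. Re (x m b) * Re (y m a)) - (\<Sum>m<N. Im (x m b) * Im (y m a))"
    and I1: "(\<Sum>m<N. Re (x m a) * Im (y m b)) + (\<Sum>m<N. Im (x m a) * Re (y m b))
        = (\<Sum>m<N. Re (x m b) * Im (y m a)) + (\<Sum>m<N. Im (x m b) * Re (y m a))"
    and R2: "(\<Sum>m<N. Re (x m a) * Re (y m b)) + (\<Sum>m<N. Im (x m a) * Im (y m b))
        = (\<Sum>m<N. Re (x m b) * Re (y m a)) + (\<Sum>m<N. Im (x m b) * Im (y m a))"
    and I2: "(\<Sum>m<N. Re (x m a) * Im (y m b)) - (\<Sum>m<N. Im (x m a) * Re (y m b))
        = (\<Sum>m<N. Im (x m b) * Re (y m a)) - (\<Sum>m<N. Re (x m b) * Im (y m a))"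
    if ab: "a < P" "b < P" for a b
  proof -
    from arg_cong[OF S1[OF ab], of Re] show "(\<Sum>m<N. Re (x m a) * Re (y m b)) - (\<Sum>m<N. Im (x m a) * Im (y m b))
        = (\<Sum>m<N. Re (x m b) * Re (y m a)) - (\<Sum>m<N. Im (x m b) * Im (y m a))"
      by (simp add: Re_sum sum_subtractf)
    from arg_cong[OF S1[OF ab], of Im] show "(\<Sum>m<N. Re (x m a) * Im (y m b)) + (\<Sum>m<N. Im (x m a) * Re (y m b))
        = (\<Sum>m<N. Re (x m b) * Im (y m a)) + (\<Sum>m<N. Im (x m b) * Re (y m a))"
      by (simp add: Im_sum sum.distrib)
    from arg_cong[OF S2[OF ab], of Re] show "(\<Sum>m<N. Re (x m a) * Re (y m b)) + (\<Sum>m<N. Im (x m a) * Im (y m b))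
        = (\<Sum>m<N. Re (x m b) * Re (y m a)) + (\<Sum>m<N. Im (x m b) * Im (y m a))"
      by (simp add: Re_sum sum.distrib)
    from arg_cong[OF S2[OF ab], of Im] show "(\<Sum>m<N. Re (x m a) * Im (y m b)) - (\<Sum>m<N. Im (x m a) * Re (y m b))
        = (\<Sum>m<N. Im (x m b) * Re (y m a)) - (\<Sum>m<N. Re (x m b) * Im (y m a))"
      by (simp add: Im_sum sum_subtractf sum_negf)
  qed
  consider "i < P" "j < P" | "i < P" "\<not> j < P" | "\<not> i < P" "j < P" | "\<not> i < P" "\<not> j < P" by blast
  then show ?thesis
  proof cases
    case 1
    then show ?thesis using R1[of i j] R2[of i j] by simp
  next
    case 2
    then have "j - P < P" using j by simp
    then show ?thesis using 2 I1[of i "j-P"] I2[of i "j-P"] by simp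
  next
    case 3
    then have "i - P < P" using i by simp
    then show ?thesis using 3 I1[of j "i-P"] I2[of j "i-P"] by simp
  next
    case 4
    then have "i - P < P" "j - P < P" using i j by simp_all
    then show ?thesis using 4 R1[of "i-P" "j-P"] R2[of "i-P" "j-P"] by simp
  qed
qed



lemma S1_lemma:
  fixes H u :: "nat \<Rightarrow> nat \<Rightarrow> complex" and c :: complex
  assumes h2: "\<And>a b. a < P \<Longrightarrow> b < P \<Longrightarrow> (\<Sum>m<N. u m a * cnj (H b m)) = (\<Sum>m<N. u m b * cnj (H a m))"
    and ab: "a < P" "b < P"
  shows "(\<Sum>m<N. c * (cnj (H a m) + u m a) * (u m b - cnj (H b m)))
       = (\<Sum>m<N. c * (cnj (H b m) + u m b) * (u m a - cnj (H a m)))"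
proof -
  have T: "(\<Sum>m<N. c * (cnj (H a m) + u m a) * (u m b - cnj (H b m)))
    = c * ((\<Sum>m<N. u m b * cnj (H a m)) - (\<Sum>m<N. cnj (H a m) * cnj (H b m)) + (\<Sum>m<N. u m a * u m b) - (\<Sum>m<N. u m a * cnj (H b m)))"
    for a b
  proof -
    have "(\<Sum>m<N. c * (cnj (H a m) + u m a) * (u m b - cnj (H b m)))
       = c * (\<Sum>m<N. (cnj (H a m) + u m a) * (u m b - cnj (H b m)))"
      by (simp add: sum_distrib_left mult.assoc)
    also have "(\<Sum>m<N. (cnj (H a m) + u m a) * (u m b - cnj (H b m)))
       = (\<Sum>m<N. u m b * cnj (H a m) - cnj (H a m) * cnj (H b m) + u m a * u m b - u m a * cnj (H b m))"
      by (rule sum.cong) (simp_all add: algebra_simps)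
    also have "\<dots> = (\<Sum>m<N. u m b * cnj (H a m)) - (\<Sum>m<N. cnj (H a m) * cnj (H b m)) + (\<Sum>m<N. u m a * u m b) - (\<Sum>m<N. u m a * cnj (H b m))"
      by (simp add: sum.distrib sum_subtractf)
    finally show ?thesis .
  qed
  have y: "(\<Sum>m<N. cnj (H a m) * cnj (H b m)) = (\<Sum>m<N. cnj (H b m) * cnj (H a m))"
    by (simp add: mult.commute)
  have z: "(\<Sum>m<N. u m a * u m b) = (\<Sum>m<N. u m b * u m a)"
    by (simp add: mult.commute)
  show ?thesis unfolding T[of a b] T[of b a] h2[OF ab] y z by simp
qed

lemma S2_lemma:
  fixes H u :: "nat \<Rightarrow> nat \<Rightarrow> complex" and Z0 :: real
  assumes h1: "\<And>a b. a < P \<Longrightarrow> b < P \<Longrightarrow> (\<Sum>m<N. cnj (u m a) * u m b) = (\<Sum>m<N. H a m * cnj (H b m))"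
    and ab: "a < P" "b < P"
  shows "(\<Sum>m<N. cnj (\<i> * Z0 * (cnj (H a m) + u m a)) * (u m b - cnj (H b m)))
       = cnj (\<Sum>m<N. cnj (\<i> * Z0 * (cnj (H b m) + u m b)) * (u m a - cnj (H a m)))"
proof -
  have T: "(\<Sum>m<N. cnj (\<i> * Z0 * (cnj (H a m) + u m a)) * (u m b - cnj (H b m)))
    = - \<i> * Z0 * ((\<Sum>m<N. H a m * u m b) - (\<Sum>m<N. H a m * cnj (H b m)) + (\<Sum>m<N. cnj (u m a) * u m b) - (\<Sum>m<N. cnj (u m a) * cnj (H b m)))"
    for a b
  proof -
    have "(\<Sum>m<N. cnj (\<i> * Z0 * (cnj (H a m) + u m a)) * (u m b - cnj (H b m)))
       = - \<i> * Z0 * (\<Sum>m<N. (H a m + cnj (u m a)) * (u m b - cnj (H b m)))"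
      by (simp add: sum_distrib_left mult.assoc)
    also have "(\<Sum>m<N. (H a m + cnj (u m a)) * (u m b - cnj (H b m)))
       = (\<Sum>m<N. H a m * u m b - H a m * cnj (H b m) + cnj (u m a) * u m b - cnj (u m a) * cnj (H b m))"
      by (rule sum.cong) (simp_all add: algebra_simps)
    also have "\<dots> = (\<Sum>m<N. H a m * u m b) - (\<Sum>m<N. H a m * cnj (H b m)) + (\<Sum>m<N. cnj (u m a) * u m b) - (\<Sum>m<N. cnj (u m a) * cnj (H b m))"
      by (simp add: sum.distrib sum_subtractf)
    finally show ?thesis .
  qed
  have e1: "(\<Sum>m<N. cnj (u m a) * cnj (H b m)) = cnj (\<Sum>m<N. H b m * u m a)"
    by (simp add: mult.commute)
  have e2: "(\<Sum>m<N. cnj (u m b) * cnj (H a m)) = cnj (\<Sum>m<N. H a m * u m b)"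
    by (simp add: mult.commute)
  have g: "\<And>w1 w2 x y. - \<i> * complex_of_real Z0 * (w1 - x + x - cnj w2) = cnj (- \<i> * complex_of_real Z0 * (w2 - y + y - cnj w1))"
    by (simp add: algebra_simps)
  show ?thesis unfolding T[of a b] T[of b a] h1[OF ab] h1[OF ab(2,1)] e1 e2 by (rule g)
qed



lemma adj_carrier: "(A :: complex mat) \<in> carrier_mat r c \<Longrightarrow> mat_adjoint A \<in> carrier_mat c r"
  unfolding mat_adjoint_def by auto

lemma adj_idx: "(A :: complex mat) \<in> carrier_mat r c \<Longrightarrow> i < c \<Longrightarrow> j < r \<Longrightarrow> mat_adjoint A $$ (i,j) = cnj (A $$ (j,i))"
  unfolding mat_adjoint_def by (simp add: mat_of_rows_index)

lemma phi_b:
  fixes Hr U :: "complex mat" and Z0 :: real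
  assumes Hr: "Hr \<in> carrier_mat P NI" and U: "U \<in> Ubar_set Hr"
    and i: "i < 2*P" and j: "j < 2*P"
  shows "phi (2*P) NI (M_mat Z0 Hr U) i j (b_vec (2*P) NI (Gamma_mat Hr U)) = 0"
proof -
  let ?k = "2*P"
  define H where "H a m = Hr $$ (a,m)" for a m
  define u where "u m a = U $$ (m,a)" for m a
  have Uc: "U \<in> carrier_mat NI P" using U Hr unfolding Ubar_set_def by auto
  have e1: "mat_adjoint U * U = Hr * mat_adjoint Hr"
    and e2: "transpose_mat U * mat_adjoint Hr = transpose_mat (transpose_mat U * mat_adjoint Hr)"
    using U unfolding Ubar_set_def by auto
  have aU: "mat_adjoint U \<in> carrier_mat P NI" using adj_carrier[OF Uc] .
  have aH: "mat_adjoint Hr \<in> carrier_mat NI P" using adj_carrier[OF Hr] .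
  have h1: "(\<Sum>m<NI. cnj (u m a) * u m b) = (\<Sum>m<NI. H a m * cnj (H b m))" if ab: "a < P" "b < P" for a b
  proof -
    have "(mat_adjoint U * U) $$ (a,b) = (\<Sum>m<NI. cnj (u m a) * u m b)"
      using aU Uc ab by (simp add: scalar_prod_def lessThan_atLeast0 adj_idx[OF Uc] u_def)
    moreover have "(Hr * mat_adjoint Hr) $$ (a,b) = (\<Sum>m<NI. H a m * cnj (H b m))"
      using aH Hr ab by (simp add: scalar_prod_def lessThan_atLeast0 adj_idx[OF Hr] H_def)
    ultimately show ?thesis using e1 by simp
  qed
  have h2: "(\<Sum>m<NI. u m a * cnj (H b m)) = (\<Sum>m<NI. u m b * cnj (H a m))" if ab: "a < P" "b < P" for a b
  proof -
    have "(transpose_mat U * mat_adjoint Hr) $$ (a,b) = (\<Sum>m<NI. u m a * cnj (H b m))"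
      using aH Uc ab by (simp add: scalar_prod_def lessThan_atLeast0 adj_idx[OF Hr] u_def H_def)
    moreover have "(transpose_mat U * mat_adjoint Hr) $$ (b,a) = (\<Sum>m<NI. u m b * cnj (H a m))"
      using aH Uc ab by (simp add: scalar_prod_def lessThan_atLeast0 adj_idx[OF Hr] u_def H_def)
    moreover have "transpose_mat (transpose_mat U * mat_adjoint Hr) $$ (a,b) = (transpose_mat U * mat_adjoint Hr) $$ (b,a)"
      using aH Uc ab by simp
    ultimately show ?thesis using e2 by metis
  qed
  define x where "x m a = \<i> * complex_of_real Z0 * (cnj (H a m) + u m a)" for m a
  define y where "y m b = u m b - cnj (H b m)" for m b
  have Mi: "M_mat Z0 Hr U $$ (m,c) = (if c < P then Re (x m c) else Im (x m (c-P)))" if mc: "m < NI" "c < ?k" for m c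
    using mc Hr aH Uc unfolding M_mat_def x_def
    by (auto simp: Let_def adj_idx[OF Hr] H_def u_def)
  have Gi: "Gamma_mat Hr U $$ (m,c) = (if c < P then Re (y m c) else Im (y m (c-P)))" if mc: "m < NI" "c < ?k" for m c
    using mc Hr aH Uc unfolding Gamma_mat_def y_def
    by (auto simp: Let_def adj_idx[OF Hr] H_def u_def)
  have bi: "b_vec ?k NI (Gamma_mat Hr U) $ (m*?k+c) = Gamma_mat Hr U $$ (m,c)" if mc: "m < NI" "c < ?k" for m c
    unfolding b_vec_def using idx_lt[OF mc] mc by (simp add: divmod_idx)
  have S1: "(\<Sum>m<NI. x m a * y m b) = (\<Sum>m<NI. x m b * y m a)" if ab: "a < P" "b < P" for a b
    unfolding x_def y_def by (rule S1_lemma[OF h2 ab])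
  have S2: "(\<Sum>m<NI. cnj (x m a) * y m b) = cnj (\<Sum>m<NI. cnj (x m b) * y m a)" if ab: "a < P" "b < P" for a b
    unfolding x_def y_def by (rule S2_lemma[OF h1 ab])
  have "phi ?k NI (M_mat Z0 Hr U) i j (b_vec ?k NI (Gamma_mat Hr U))
    = (\<Sum>m<NI. (if i < P then Re (x m i) else Im (x m (i-P))) * (if j < P then Re (y m j) else Im (y m (j-P))))
    - (\<Sum>m<NI. (if j < P then Re (x m j) else Im (x m (j-P))) * (if i < P then Re (y m i) else Im (y m (i-P))))"
    unfolding phi_def sum_subtractf[symmetric]
    by (rule sum.cong[OF refl]) (simp add: bi Mi Gi i j)
  also have "\<dots> = 0" using real_sym[OF S1 S2 i j] by simp
  finally show ?thesis .
qed



lemma rank_final: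
  fixes A :: "real mat" and bv :: "real vec"
  assumes A: "A \<in> carrier_mat n c" and dist: "distinct (cols A)"
    and li: "\<And>v. v \<in> carrier_vec c \<Longrightarrow> A *\<^sub>v v = 0\<^sub>v n \<Longrightarrow> v = 0\<^sub>v c"
    and bA: "bv = A *\<^sub>v \<alpha>" and al: "\<alpha> \<in> carrier_vec c"
  shows "vec_space.rank n (mat_of_cols n (cols A @ [bv])) = c"
proof -
  interpret vec_space "TYPE(real)" n .
  have lin: "lin_indpt (set (cols A))"
  proof
    assume "lin_dep (set (cols A))"
    from lin_depE[OF A this dist] obtain v where "v \<in> carrier_vec c" "v \<noteq> 0\<^sub>v c" "A *\<^sub>v v = 0\<^sub>v n" .
    then show False using li by blast
  qed
  have rA: "rank A = c" by (rule lin_indpt_full_rank[OF A dist lin])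
  have S: "set (cols A) \<subseteq> carrier_vec n" using A by (auto simp: cols_def)
  have "bv = lincomb (\<lambda>a. \<alpha> $ find_first a (cols A)) (set (cols A))"
    unfolding bA by (rule lincomb_eq_mat_mult[OF A al dist, symmetric])
  then have bspan: "bv \<in> span (set (cols A))"
    unfolding span_def by auto
  have bc: "bv \<in> carrier_vec n" using A al bA by simp
  have cW: "cols (mat_of_cols n (cols A @ [bv])) = cols A @ [bv]"
    using S bc by (intro cols_mat_of_cols) auto
  have sp: "span (set (cols A)) = span (set (cols A) \<union> {bv})"
    using already_in_span[of "set (cols A)" bv] S bspan by simp
  have "rank (mat_of_cols n (cols A @ [bv])) = rank A"
    unfolding rank_def cW using sp by (simp add: Un_commute)
  then show ?thesis using rA by simp
qed



lemma sum_split_add: "(\<Sum>t<c+(d::nat). f t) = (\<Sum>t<c. f t) + (\<Sum>s<d. f (c+s))"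
proof (induction d)
  case 0 then show ?case by simp
next
  case (Suc d) then show ?case by (simp add: add.assoc)
qed

theorem lemma3:
  fixes Z0 :: real and K :: nat and Nk :: "nat \<Rightarrow> nat" and NI :: nat
    and Hr U :: "complex mat" and P \<kappa> :: nat and M G :: "real mat"
  defines "P \<equiv> (\<Sum>k = 1..K. Nk k)"
    and "\<kappa> \<equiv> 2 * P"
    and "M \<equiv> M_mat Z0 Hr U"
    and "G \<equiv> Gamma_mat Hr U"
  assumes "Z0 > 0"
    and "NI \<ge> \<kappa>"
    and "Hr \<in> carrier_mat P NI"
    and "U \<in> Ubar_set Hr"
    and "\<forall>I J. I \<subseteq> {..<NI} \<longrightarrow> J \<subseteq> {..<\<kappa>} \<longrightarrow> card I = card J
           \<longrightarrow> det (submatrix M I J) \<noteq> 0"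
  shows "vec_space.rank (NI * \<kappa>)
           (mat_of_cols (NI * \<kappa>) (cols (A_mat \<kappa> NI M) @ [b_vec \<kappa> NI G]))
         = NI * \<kappa> - \<kappa> * (\<kappa> - 1) div 2"
proof -
  note Hr = assms(7) and Ub = assms(8) and hyp = assms(9)
  have kN: "\<kappa> \<le> NI" using assms(6) .
  let ?n = "NI * \<kappa>"
  have Uc: "U \<in> carrier_mat NI P" using Ub Hr unfolding Ubar_set_def by auto
  have Mc: "M \<in> carrier_mat NI \<kappa>"
    unfolding M_def M_mat_def \<kappa>_def using Hr Uc adj_carrier[OF Hr] by (simp add: Let_def)
  have MIN: "\<forall>m a. m + a \<le> NI \<longrightarrow> a \<le> \<kappa> \<longrightarrow> det (mat a a (\<lambda>(i,j). M $$ (m+i, j))) \<noteq> 0"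
  proof (intro allI impI)
    fix m a assume ma: "m + a \<le> NI" "a \<le> \<kappa>"
    have s1: "{m..<m+a} \<subseteq> {..<NI}" "{..<a} \<subseteq> {..<\<kappa>}" "card {m..<m+a} = card {..<a}"
      using ma by auto
    have "det (submatrix M {m..<m+a} {..<a}) \<noteq> 0"
      using hyp[rule_format, OF s1] .
    moreover have "submatrix M {m..<m+a} {..<a} = mat a a (\<lambda>(i,j). M $$ (m+i, j))"
      using Mc ma by (intro submatrix_interval) auto
    ultimately show "det (mat a a (\<lambda>(i,j). M $$ (m+i, j))) \<noteq> 0" by simp
  qed
  let ?M0 = "mat \<kappa> \<kappa> (\<lambda>(i,j). M $$ (i, j))"
  have "det ?M0 \<noteq> 0" using MIN[rule_format, of 0 \<kappa>] kN by simp
  then have "?M0 \<in> Units (ring_mat TYPE(real) \<kappa> undefined)"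
    by (intro det_non_zero_imp_unit) auto
  then obtain N0 where N0: "N0 \<in> carrier_mat \<kappa> \<kappa>" "N0 * ?M0 = 1\<^sub>m \<kappa>"
    unfolding Units_def ring_mat_def by auto
  define L where "L = LP \<kappa> NI"
  define c where "c = length L"
  define d where "d = length (PL \<kappa>)"
  have cd: "c + d = ?n" unfolding c_def d_def L_def using count(1)[OF kN] .
  have c_eq: "c = NI * \<kappa> - \<kappa> * (\<kappa> - 1) div 2" unfolding c_def L_def using count(2)[OF kN] .
  define AC where "AC i = A_col \<kappa> NI M (fst (L ! i)) (snd (L ! i))" for i
  have colsA: "cols (A_mat \<kappa> NI M) = map AC [0..<c]"
    unfolding cols_A AC_def c_def L_def by (intro nth_equalityI) (auto simp: case_prod_beta)
  define A where "A = A_mat \<kappa> NI M"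
  have dcA: "dim_col A = c"
    using arg_cong[OF colsA, of length] unfolding A_def by simp
  have drA: "dim_row A = ?n" unfolding A_def A_mat_def by (rule mat_of_cols_carrier(2))
  have Ac: "A \<in> carrier_mat ?n c" by (rule carrier_matI[OF drA dcA])
  have Aidx: "A $$ (r,t) = AC t $ r" if "r < ?n" "t < c" for r t
  proof -
    have "A $$ (r,t) = col A t $ r" using Ac that by simp
    also have "col A t = cols A ! t" using Ac that by simp
    finally show ?thesis using colsA that unfolding A_def by simp
  qed
  have AV: "(A *\<^sub>v v) $ r = (\<Sum>t<c. v $ t * AC t $ r)" if "v \<in> carrier_vec c" "r < ?n" for v r
    using that Ac by (simp add: scalar_prod_def lessThan_atLeast0 Aidx mult.commute)
  have Lset: "t < c \<Longrightarrow> L ! t \<in> set (LP \<kappa> NI)" for t unfolding c_def L_def by simp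
  have injA: "\<forall>t<c. z t = 0" if "\<forall>r<?n. (\<Sum>t<c. z t * AC t $ r) = 0" for z
    using inj_list[OF MIN, of z] that unfolding AC_def c_def L_def by simp
  define EC where "EC = map AC [0..<c] @ map (Xc \<kappa> NI N0) (PL \<kappa>)"
  define E where "E = mat_of_cols ?n EC"
  have lenEC: "length EC = ?n" unfolding EC_def using cd d_def by simp
  have ECc: "set EC \<subseteq> carrier_vec ?n" unfolding EC_def AC_def by (auto simp: A_col_def Xc_def)
  have Ec: "E \<in> carrier_mat ?n ?n" unfolding E_def using mat_of_cols_carrier(1)[of ?n EC] unfolding lenEC .
  have colE: "col E t = EC ! t" if "t < ?n" for t
  proof -
    have "EC ! t \<in> carrier_vec ?n" using ECc nth_mem[of t EC] that lenEC by auto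
    then show ?thesis unfolding E_def using col_mat_of_cols[of t EC ?n] that lenEC by simp
  qed
  have colE1: "col E t = AC t" if "t < c" for t
    using colE[of t] that cd by (simp add: EC_def nth_append)
  have colE2: "col E (c+s) = Xc \<kappa> NI N0 (PL \<kappa> ! s)" if "s < d" for s
    using colE[of "c+s"] that cd by (simp add: EC_def nth_append d_def)
  have PLs: "s < d \<Longrightarrow> fst (PL \<kappa> ! s) < snd (PL \<kappa> ! s) \<and> snd (PL \<kappa> ! s) < \<kappa>" for s
    using nth_mem[of s "PL \<kappa>"] unfolding d_def set_PL by (auto simp: case_prod_beta)
  have phiA: "phi \<kappa> NI M i j (col E t) = 0" if "t < c" "i < \<kappa>" "j < \<kappa>" for t i j
  proof -
    have "L ! t \<in> set (LP \<kappa> NI)" using Lset that by simp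
    then have "fst (L ! t) < NI" "snd (L ! t) + fst (L ! t) < NI" unfolding set_LP by auto
    then show ?thesis unfolding colE1[OF that(1)] AC_def by (intro phi_A_col) (use that in auto)
  qed
  have phiX: "phi \<kappa> NI M (fst (PL \<kappa> ! s0)) (snd (PL \<kappa> ! s0)) (col E (c+s)) = (if s = s0 then 1 else 0)"
    if "s < d" "s0 < d" for s s0
  proof -
    obtain a l where al: "PL \<kappa> ! s = (a,l)" by (cases "PL \<kappa> ! s")
    have "phi \<kappa> NI M (fst (PL \<kappa> ! s0)) (snd (PL \<kappa> ! s0)) (Xc \<kappa> NI N0 (a,l))
      = (if (fst (PL \<kappa> ! s0), snd (PL \<kappa> ! s0)) = (a,l) then 1 else 0)"
      using phi_Xc[OF kN N0(1) N0(2), of "fst (PL \<kappa> ! s0)" "snd (PL \<kappa> ! s0)" a l] PLs[OF that(1)] PLs[OF that(2)] al by simp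
    also have "\<dots> = (if s = s0 then 1 else 0)"
      using nth_eq_iff_index_eq[OF distinct_PL, of s0 \<kappa> s] that al unfolding d_def by auto
    finally show ?thesis unfolding colE2[OF that(1)] al .
  qed
  have ext: "phi \<kappa> NI M (fst (PL \<kappa> ! s0)) (snd (PL \<kappa> ! s0)) (E *\<^sub>v z) = z $ (c+s0)"
    if z: "z \<in> carrier_vec ?n" and s0: "s0 < d" for z s0
  proof -
    have ij: "fst (PL \<kappa> ! s0) < \<kappa>" "snd (PL \<kappa> ! s0) < \<kappa>" using PLs[OF s0] by auto
    have "phi \<kappa> NI M (fst (PL \<kappa> ! s0)) (snd (PL \<kappa> ! s0)) (E *\<^sub>v z)
      = (\<Sum>t<c+d. z $ t * phi \<kappa> NI M (fst (PL \<kappa> ! s0)) (snd (PL \<kappa> ! s0)) (col E t))"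
      using phi_mult[OF Ec z ij] cd by simp
    also have "\<dots> = (\<Sum>s<d. z $ (c+s) * (if s = s0 then 1 else 0))"
      unfolding sum_split_add using phiA ij phiX s0 by simp
    also have "\<dots> = z $ (c+s0)" using s0 by (simp add: if_distrib cong: if_cong)
    finally show ?thesis .
  qed
  have Ez: "(E *\<^sub>v z) $ r = (\<Sum>t<c. z $ t * AC t $ r) + (\<Sum>s<d. z $ (c+s) * col E (c+s) $ r)"
    if z: "z \<in> carrier_vec ?n" and r: "r < ?n" for z r
  proof -
    have "(E *\<^sub>v z) $ r = (\<Sum>t<c+d. z $ t * col E t $ r)"
      using Ec z r cd by (simp add: scalar_prod_def lessThan_atLeast0 mult.commute)
    then show ?thesis unfolding sum_split_add using colE1 by simp
  qed
  have phi0: "phi \<kappa> NI M i j (0\<^sub>v ?n) = 0" if "i < \<kappa>" "j < \<kappa>" for i j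
    unfolding phi_def using idx_lt that by (intro sum.neutral) auto
  have injE: "z = 0\<^sub>v ?n" if z: "z \<in> carrier_vec ?n" and Ez0: "E *\<^sub>v z = 0\<^sub>v ?n" for z
  proof -
    have zX: "z $ (c+s) = 0" if "s < d" for s
      using ext[OF z that] phi0 PLs[OF that] Ez0 by simp
    have "\<forall>r<?n. (\<Sum>t<c. z $ t * AC t $ r) = 0"
      using Ez[OF z] Ez0 zX by simp
    then have zA: "\<forall>t<c. z $ t = 0" using injA[of "\<lambda>t. z $ t"] by simp
    show ?thesis
    proof (rule eq_vecI)
      fix t assume "t < dim_vec (0\<^sub>v ?n :: real vec)"
      then have t: "t < c + d" using cd by simp
      show "z $ t = 0\<^sub>v ?n $ t"
      proof (cases "t < c")
        case True then show ?thesis using zA t cd by simp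
      next
        case False
        then have "t = c + (t - c)" "t - c < d" using t by auto
        then show ?thesis using zX[of "t-c"] t cd by simp
      qed
    qed (use z in simp)
  qed
  have dE: "det E \<noteq> 0"
  proof
    assume "det E = 0"
    then obtain v where v: "v \<in> carrier_vec ?n" "v \<noteq> 0\<^sub>v ?n" "E *\<^sub>v v = 0\<^sub>v ?n"
      using det_0_iff_vec_prod_zero_field[OF Ec] by blast
    then show False using injE[OF v(1) v(3)] by simp
  qed
  from det_non_zero_imp_unit[OF Ec dE, of undefined]
  obtain F where F: "F \<in> carrier_mat ?n ?n" "E * F = 1\<^sub>m ?n"
    unfolding Units_def ring_mat_def by auto
  define bv where "bv = b_vec \<kappa> NI G"
  have bvc: "bv \<in> carrier_vec ?n" unfolding bv_def b_vec_def by simp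
  define z where "z = F *\<^sub>v bv"
  have zc: "z \<in> carrier_vec ?n" unfolding z_def using F bvc by simp
  have Ezb: "E *\<^sub>v z = bv" unfolding z_def using F Ec bvc
  proof -
    have "E *\<^sub>v (F *\<^sub>v bv) = (E * F) *\<^sub>v bv" using assoc_mult_mat_vec[OF Ec F(1) bvc] by simp
    also have "\<dots> = bv" unfolding F(2) using bvc by simp
    finally show "E *\<^sub>v (F *\<^sub>v bv) = bv" .
  qed
  have zX: "z $ (c+s) = 0" if s: "s < d" for s
  proof -
    have ij: "fst (PL \<kappa> ! s) < 2*P" "snd (PL \<kappa> ! s) < 2*P" using PLs[OF s] unfolding \<kappa>_def by auto
    have "phi \<kappa> NI M (fst (PL \<kappa> ! s)) (snd (PL \<kappa> ! s)) bv = 0"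
      using phi_b[OF Hr Ub ij, of Z0] unfolding bv_def M_def G_def \<kappa>_def by simp
    then show ?thesis using ext[OF zc s] Ezb by simp
  qed
  define \<alpha> where "\<alpha> = vec c (\<lambda>t. z $ t)"
  have alc: "\<alpha> \<in> carrier_vec c" unfolding \<alpha>_def by simp
  have bA: "bv = A *\<^sub>v \<alpha>"
  proof (rule eq_vecI)
    fix r assume "r < dim_vec (A *\<^sub>v \<alpha>)"
    then have r: "r < ?n" using Ac by simp
    have "bv $ r = (E *\<^sub>v z) $ r" using Ezb by simp
    also have "\<dots> = (\<Sum>t<c. z $ t * AC t $ r)" using Ez[OF zc r] zX by simp
    also have "\<dots> = (A *\<^sub>v \<alpha>) $ r" using AV[OF alc r] unfolding \<alpha>_def by simp
    finally show "bv $ r = (A *\<^sub>v \<alpha>) $ r" .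
  qed (use Ac bvc in simp)
  have li: "v = 0\<^sub>v c" if v: "v \<in> carrier_vec c" and Av: "A *\<^sub>v v = 0\<^sub>v ?n" for v
  proof -
    have "\<forall>r<?n. (\<Sum>t<c. v $ t * AC t $ r) = 0"
    proof (intro allI impI)
      fix r assume r: "r < ?n"
      have "(A *\<^sub>v v) $ r = 0" using Av r by simp
      then show "(\<Sum>t<c. v $ t * AC t $ r) = 0" using AV[OF v r] by simp
    qed
    then have "\<forall>t<c. v $ t = 0" using injA[of "\<lambda>t. v $ t"] by simp
    then show ?thesis using v by (intro eq_vecI) auto
  qed
  have dist: "distinct (cols A)"
  proof (rule ccontr)
    assume "\<not> distinct (cols A)"
    then have "\<not> distinct (map AC [0..<c])" unfolding A_def colsA .
    then obtain i j where ij0: "i < length (map AC [0..<c])" "j < length (map AC [0..<c])" "i \<noteq> j"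
        "map AC [0..<c] ! i = map AC [0..<c] ! j"
      unfolding distinct_conv_nth by blast
    then have ij: "i < c" "j < c" "i \<noteq> j" "AC i = AC j" by simp_all
    define w where "w t = (if t = i then 1 else if t = j then -1 else (0::real))" for t
    have "\<forall>r<?n. (\<Sum>t<c. w t * AC t $ r) = 0"
    proof (intro allI impI)
      fix r assume r: "r < ?n"
      have "(\<Sum>t<c. w t * AC t $ r) = (\<Sum>t<c. (if t = i then AC i $ r else 0) + (if t = j then - AC j $ r else 0))"
        by (rule sum.cong) (auto simp: w_def ij(3))
      also have "\<dots> = (\<Sum>t<c. (if t = i then AC i $ r else 0)) + (\<Sum>t<c. (if t = j then - AC j $ r else 0))"
        by (rule sum.distrib)
      also have "\<dots> = AC i $ r + (- AC j $ r)" using ij(1,2) by simp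
      also have "\<dots> = 0" unfolding ij(4) by simp
      finally show "(\<Sum>t<c. w t * AC t $ r) = 0" .
    qed
    then have "\<forall>t<c. w t = 0" by (rule injA)
    then have "w i = 0" using ij(1) by blast
    then show False unfolding w_def by simp
  qed
  have "vec_space.rank ?n (mat_of_cols ?n (cols A @ [bv])) = c"
    by (rule rank_final[OF Ac dist li bA alc])
  then show ?thesis unfolding A_def bv_def c_eq .
qed


end
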